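(* Let $\Theta$ be a finite-dimensional real inner product space, $\mathcal L:\Theta\to\mathbb R_+$ differentiable, $\theta_0\in\Theta$, $\varepsilon\in\mathbb R_+^*$, $R\in\mathbb R_+$, $c\in\mathbb R_+^*$. If for all $\theta\in\Theta$ with $\|\theta-\theta_0\|\le R$ it holds $\|\nabla\mathcal L(\theta)\|\ge(\mathcal L(\theta)-\varepsilon)_+/(\|\theta-\theta_0\|+c)$, then $(\mathcal L,\theta_0)$ satisfies the Convergence Criterion with limit error $\varepsilon_0=\tau\mathcal L(\theta_0)+(1-\tau)\varepsilon$, where $\tau=c/(R+c)\in(0,1]$, and with constant $\kappa=3c^{-2}(\mathcal L(\theta_0)-\varepsilon)_+^{-2}\in\mathbb R_+\cup\{+\infty\}$.
   Context: $(x)_+=\max\{0,x\}$. Convergence Criterion: $(\mathcal L,\theta_0)$ satisfies it with limit error $\varepsilon$ and constant $\kappa\in\mathbb R_+$ if every $\theta:\mathbb R_+\to\Theta$ with $\theta(0)=\theta_0$ and $\partial_t\theta=-\nabla\mathcal L(\theta)$ satisfies $\mathcal L(\theta_t)\le\varepsilon+(\kappa t+1/c)^{-1/3}$ for all $t>0$, where $c=\mathcal L(\theta_0)^3$. For $\kappa=+\infty$ (here arising when $\mathcal L(\theta_0)\le\varepsilon$), it means every such flow satisfies $\mathcal L(\theta_t)\le\varepsilon$ for all $t\ge0$. *)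

theory Defs
  imports "HOL-Analysis.Analysis"
begin

definition grad_flow :: "('a::euclidean_space \<Rightarrow> 'a) \<Rightarrow> 'a \<Rightarrow> (real \<Rightarrow> 'a) \<Rightarrow> bool" where
  "grad_flow gradL theta0 th \<longleftrightarrow>
     th 0 = theta0 \<and>
     (\<forall>t\<ge>0. (th has_vector_derivative (- gradL (th t))) (at t within {0..}))"

definition conv_crit ::
  "('a::euclidean_space \<Rightarrow> real) \<Rightarrow> ('a \<Rightarrow> 'a) \<Rightarrow> 'a \<Rightarrow> real \<Rightarrow> ereal \<Rightarrow> bool" where
  "conv_crit L gradL theta0 eps kappa \<longleftrightarrow>
     (if kappa = \<infinity> then
        (\<forall>th. grad_flow gradL theta0 th \<longrightarrow> (\<forall>t\<ge>0. L (th t) \<le> eps))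
      else
        (\<forall>th. grad_flow gradL theta0 th \<longrightarrow>
           (\<forall>t>0. L (th t) \<le> eps + (real_of_ereal kappa * t + 1 / (L theta0 ^ 3)) powr (-1/3))))"

end

theory Submission
  imports Defs
begin

lemma chainL:
  fixes L :: "'a::euclidean_space \<Rightarrow> real"
  assumes "GDERIV L (th t) :> G" "(th has_vector_derivative v) (at t)"
  shows "((\<lambda>u. L (th u)) has_real_derivative (v \<bullet> G)) (at t)"
proof -
  have "(L has_derivative (\<lambda>h. h \<bullet> G)) (at (th t))" using assms(1) by (simp add: gderiv_def)
  moreover have "(th has_derivative (\<lambda>h. h *\<^sub>R v)) (at t)" using assms(2) by (simp add: has_vector_derivative_def)
  ultimately have "((\<lambda>u. L (th u)) has_derivative (\<lambda>h. (h *\<^sub>R v) \<bullet> G)) (at t)"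
    using has_derivative_compose[of th _ t UNIV L] by blast
  then show ?thesis unfolding has_field_derivative_def
    by (rule has_derivative_eq_rhs) (auto simp: mult.commute)
qed

lemma chainD:
  fixes th :: "real \<Rightarrow> 'a::euclidean_space"
  assumes "(th has_vector_derivative v) (at t)" "d > 0"
  shows "((\<lambda>u. sqrt (norm (th u - x0)^2 + d^2)) has_real_derivative
      (((th t - x0) \<bullet> v) / sqrt (norm (th t - x0)^2 + d^2))) (at t)"
proof -
  have p: "norm (th t - x0)^2 + d^2 > 0" using assms(2) by (simp add: add_nonneg_pos)
  have th: "(th has_derivative (\<lambda>h. h *\<^sub>R v)) (at t)" using assms(1) by (simp add: has_vector_derivative_def)
  have "((\<lambda>u. (th u - x0) \<bullet> (th u - x0)) has_derivative (\<lambda>h. (th t - x0) \<bullet> (h *\<^sub>R v) + (h *\<^sub>R v) \<bullet> (th t - x0))) (at t)"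
    using has_derivative_diff[OF th has_derivative_const[of x0]] by (intro has_derivative_inner) simp_all
  then have "((\<lambda>u. (th u - x0) \<bullet> (th u - x0)) has_real_derivative (2 * ((th t - x0) \<bullet> v))) (at t)"
    unfolding has_field_derivative_def
    by (rule has_derivative_eq_rhs) (auto simp: inner_commute algebra_simps)
  then have "((\<lambda>u. norm (th u - x0)^2 + d^2) has_real_derivative (2 * ((th t - x0) \<bullet> v))) (at t)"
    using DERIV_add[OF _ DERIV_const[of "d^2"]] by (simp add: power2_norm_eq_inner)
  from DERIV_chain2[OF DERIV_real_sqrt[OF p] this] show ?thesis
    using p by (auto simp: field_simps)
qed


lemma flow_at:
  assumes "grad_flow gradL theta0 th" "t > 0"
  shows "(th has_vector_derivative (- gradL (th t))) (at t)"
proof -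
  have "(th has_vector_derivative (- gradL (th t))) (at t within {0..})"
    using assms unfolding grad_flow_def by auto
  moreover have "at t within {0..} = at t"
    using assms(2) by (intro at_within_interior) auto
  ultimately show ?thesis by simp
qed

lemma flow_cont:
  assumes "grad_flow gradL theta0 th"
  shows "continuous_on {0..} th"
proof -
  have "\<forall>t\<in>{0..}. continuous (at t within {0..}) th"
    using assms unfolding grad_flow_def by (auto intro: has_vector_derivative_continuous)
  then show ?thesis by (simp add: continuous_on_eq_continuous_within)
qed

lemma L_cont:
  fixes L :: "'a::euclidean_space \<Rightarrow> real"
  assumes "\<forall>\<theta>. GDERIV L \<theta> :> gradL \<theta>"
  shows "continuous_on UNIV L"
proof -
  have "\<forall>x. continuous (at x) L"
    using assms unfolding gderiv_def by (auto intro: has_derivative_continuous)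
  then show ?thesis by (simp add: continuous_at_imp_continuous_on)
qed

lemma comp_cont:
  fixes L :: "'a::euclidean_space \<Rightarrow> real"
  assumes "\<forall>\<theta>. GDERIV L \<theta> :> gradL \<theta>" "grad_flow gradL theta0 th" "0 \<le> a"
  shows "continuous_on {a..b} (\<lambda>u. L (th u))"
proof -
  have "continuous_on {a..b} th" using flow_cont[OF assms(2)]
    by (rule continuous_on_subset) (use assms(3) in auto)
  then show ?thesis
    using continuous_on_compose2[OF L_cont[OF assms(1)]] by blast
qed

lemma L_deriv:
  fixes L :: "'a::euclidean_space \<Rightarrow> real"
  assumes "\<forall>\<theta>. GDERIV L \<theta> :> gradL \<theta>" "grad_flow gradL theta0 th" "t > 0"
  shows "((\<lambda>u. L (th u)) has_real_derivative (- ((norm (gradL (th t)))^2))) (at t)"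
  using chainL[OF _ flow_at[OF assms(2,3)], of L "gradL (th t)"] assms(1)
  by (simp add: power2_norm_eq_inner)

lemma L_mono:
  fixes L :: "'a::euclidean_space \<Rightarrow> real"
  assumes "\<forall>\<theta>. GDERIV L \<theta> :> gradL \<theta>" "grad_flow gradL theta0 th" "0 \<le> a" "a \<le> b"
  shows "L (th b) \<le> L (th a)"
proof (rule DERIV_nonpos_imp_decreasing_open[OF assms(4)])
  fix x assume "a < x" "x < b"
  then show "\<exists>y. ((\<lambda>u. L (th u)) has_real_derivative y) (at x) \<and> y \<le> 0"
    using L_deriv[OF assms(1,2), of x] assms(3) by auto
qed (rule comp_cont[OF assms(1,2,3)])


lemma ball_bound:
  fixes L :: "'a::euclidean_space \<Rightarrow> real"
  assumes grad: "\<forall>\<theta>. GDERIV L \<theta> :> gradL \<theta>" and fl: "grad_flow gradL theta0 th"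
    and c: "c > 0"
    and loj: "\<forall>\<theta>. norm (\<theta> - theta0) \<le> R \<longrightarrow>
               norm (gradL \<theta>) \<ge> max 0 (L \<theta> - eps) / (norm (\<theta> - theta0) + c)"
    and T: "0 \<le> T" and inb: "\<forall>v\<in>{0..<T}. norm (th v - theta0) \<le> R"
    and pos: "\<forall>v\<in>{0..T}. L (th v) \<ge> eps"
  shows "(L (th T) - eps) * (norm (th T - theta0) + c) \<le> (L theta0 - eps) * c"
proof -
  have th0: "th 0 = theta0" using fl unfolding grad_flow_def by simp
  have m0: "L theta0 - eps \<ge> 0" using pos T th0 by force
  have key: "(L (th T) - eps) * (norm (th T - theta0) + c) \<le> (L theta0 - eps) * (\<delta> + c)"
    if dp: "\<delta> > 0" for \<delta>
  proof -
    define \<Phi> where "\<Phi> u = (L (th u) - eps) * (sqrt (norm (th u - theta0)^2 + \<delta>^2) + c)" for u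
    have "\<Phi> T \<le> \<Phi> 0"
    proof (rule DERIV_nonpos_imp_decreasing_open[OF T])
      fix x assume x: "0 < x" "x < T"
      define g where "g = gradL (th x)"
      define w where "w = th x - theta0"
      define D where "D = sqrt (norm w^2 + \<delta>^2)"
      define f where "f = L (th x) - eps"
      have f0: "f \<ge> 0" using pos x unfolding f_def by auto
      have wR: "norm w \<le> R" using inb x unfolding w_def by auto
      have lj: "norm g * (norm w + c) \<ge> f"
        using loj[rule_format, OF wR[unfolded w_def]] f0 c unfolding f_def g_def w_def
        by (simp add: divide_le_eq add_nonneg_pos)
      have Dw: "D \<ge> norm w" unfolding D_def by (simp add: real_le_rsqrt)
      have Dp: "D > 0" unfolding D_def using dp by (simp add: add_nonneg_pos)
      have cs: "w \<bullet> (- g) \<le> norm w * norm g"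
        by (metis norm_cauchy_schwarz norm_minus_cancel)
      have d1: "((\<lambda>u. L (th u)) has_real_derivative (- ((norm g)^2))) (at x)"
        using L_deriv[OF grad fl x(1)] unfolding g_def .
      have d2: "((\<lambda>u. sqrt (norm (th u - theta0)^2 + \<delta>^2)) has_real_derivative ((w \<bullet> (- g)) / D)) (at x)"
        using chainD[OF flow_at[OF fl x(1)] dp, of theta0] unfolding w_def D_def g_def .
      have d: "(\<Phi> has_real_derivative ((- ((norm g)^2)) * (D + c) + f * ((w \<bullet> (- g)) / D))) (at x)"
        unfolding \<Phi>_def
        using DERIV_mult[OF DERIV_diff[OF d1 DERIV_const[of eps]] DERIV_add[OF d2 DERIV_const[of c]]]
        unfolding f_def D_def w_def by (simp add: algebra_simps)
      have "f * ((w \<bullet> (- g)) / D) \<le> f * (norm w * norm g / D)"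
        using f0 cs Dp by (intro mult_left_mono divide_right_mono) auto
      also have "\<dots> \<le> f * norm g"
      proof -
        have "norm w * norm g / D \<le> norm g"
          using Dw Dp mult_right_mono[OF Dw norm_ge_zero[of g]] by (simp add: divide_le_eq mult.commute)
        then show ?thesis using f0 by (rule mult_left_mono)
      qed
      also have "\<dots> \<le> norm g * (norm g * (norm w + c))"
        using mult_left_mono[OF lj norm_ge_zero[of g]] by (simp add: mult.commute)
      also have "\<dots> \<le> (norm g)^2 * (D + c)"
        using mult_left_mono[of "norm w + c" "D + c" "norm g * norm g"] Dw by (simp add: power2_eq_square mult.assoc)
      finally have "(- ((norm g)^2)) * (D + c) + f * ((w \<bullet> (- g)) / D) \<le> 0" by simp
      with d show "\<exists>y. (\<Phi> has_real_derivative y) (at x) \<and> y \<le> 0" by blast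
    next
      have thc: "continuous_on {0..T} th" using flow_cont[OF fl]
        by (rule continuous_on_subset) auto
      show "continuous_on {0..T} \<Phi>" unfolding \<Phi>_def
        by (intro continuous_intros comp_cont[OF grad fl] thc) simp
    qed
    moreover have "\<Phi> 0 = (L theta0 - eps) * (\<delta> + c)" unfolding \<Phi>_def th0 using dp by simp
    moreover have "(L (th T) - eps) * (norm (th T - theta0) + c) \<le> \<Phi> T"
      unfolding \<Phi>_def using pos T by (intro mult_left_mono) (auto simp: real_le_rsqrt)
    ultimately show ?thesis by linarith
  qed
  show ?thesis
  proof (cases "L theta0 - eps = 0")
    case True then show ?thesis using key[of 1] by simp
  next
    case False
    then have mp: "L theta0 - eps > 0" using m0 by simp
    show ?thesis
    proof (rule field_le_epsilon)
      fix e :: real assume e: "e > 0"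
      have "(L (th T) - eps) * (norm (th T - theta0) + c) \<le> (L theta0 - eps) * (e / (L theta0 - eps) + c)"
        using key[of "e / (L theta0 - eps)"] e mp by simp
      also have "\<dots> = (L theta0 - eps) * c + e" using mp by (simp add: field_simps)
      finally show "(L (th T) - eps) * (norm (th T - theta0) + c) \<le> (L theta0 - eps) * c + e" .
    qed
  qed
qed


lemma decay:
  fixes L :: "'a::euclidean_space \<Rightarrow> real"
  assumes grad: "\<forall>\<theta>. GDERIV L \<theta> :> gradL \<theta>" and fl: "grad_flow gradL theta0 th"
    and c: "c > 0"
    and loj: "\<forall>\<theta>. norm (\<theta> - theta0) \<le> R \<longrightarrow>
               norm (gradL \<theta>) \<ge> max 0 (L \<theta> - eps) / (norm (\<theta> - theta0) + c)"
    and t: "0 \<le> t" and inb: "\<forall>u\<in>{0..t}. norm (th u - theta0) \<le> R"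
    and bd: "\<forall>u\<in>{0..t}. (L (th u) - eps) * (norm (th u - theta0) + c) \<le> (L theta0 - eps) * c"
    and pos: "\<forall>u\<in>{0..t}. L (th u) > eps"
  shows "inverse ((L theta0 - eps)^3) + 3 / ((L theta0 - eps)^2 * c^2) * t \<le> inverse ((L (th t) - eps)^3)"
proof -
  define m where "m = L theta0 - eps"
  define K where "K = 3 / (m^2 * c^2)"
  have th0: "th 0 = theta0" using fl unfolding grad_flow_def by simp
  have mp: "m > 0" using pos t th0 unfolding m_def by force
  define h where "h u = inverse ((L (th u) - eps)^3) - K * u" for u
  have "h 0 \<le> h t"
  proof (rule DERIV_nonneg_imp_increasing_open[OF t])
    fix x assume x: "0 < x" "x < t"
    define g where "g = gradL (th x)"
    define w where "w = th x - theta0"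
    define f where "f = L (th x) - eps"
    have fp: "f > 0" using pos x unfolding f_def by auto
    have wR: "norm w \<le> R" using inb x unfolding w_def by auto
    have lj: "norm g * (norm w + c) \<ge> f"
      using loj[rule_format, OF wR[unfolded w_def]] fp c unfolding f_def g_def w_def
      by (simp add: divide_le_eq add_nonneg_pos)
    have bx: "f * (norm w + c) \<le> m * c" using bd x unfolding f_def w_def m_def by auto
    have "f^2 \<le> norm g * f * (norm w + c)"
      using mult_left_mono[OF lj, of f] fp by (simp add: power2_eq_square algebra_simps)
    also have "\<dots> \<le> norm g * (m * c)"
      using mult_left_mono[OF bx norm_ge_zero[of g]] by (simp add: algebra_simps)
    finally have gi: "f^2 \<le> norm g * (m * c)" .
    have gi2: "f^4 \<le> (norm g)^2 * (m^2 * c^2)"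
      using power_mono[OF gi, of 2] fp by (simp add: power_mult_distrib flip: power_mult)
    have d1: "((\<lambda>u. L (th u)) has_real_derivative (- ((norm g)^2))) (at x)"
      using L_deriv[OF grad fl x(1)] unfolding g_def .
    have d2: "((\<lambda>u. L (th u) - eps) has_real_derivative (- ((norm g)^2))) (at x)"
      using DERIV_diff[OF d1 DERIV_const[of eps]] by simp
    have d3: "((\<lambda>u. (L (th u) - eps)^3) has_real_derivative (3 * (- ((norm g)^2)) * f^2)) (at x)"
      using DERIV_power[OF d2, of 3] unfolding f_def by (simp add: mult.assoc)
    have d4: "((\<lambda>u. inverse ((L (th u) - eps)^3)) has_real_derivative
       (- ((3 * (- ((norm g)^2)) * f^2) * inverse ((f^3)^2)))) (at x)"
      using DERIV_inverse_fun[OF d3] fp unfolding f_def by simp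
    have d5: "(h has_real_derivative (- ((3 * (- ((norm g)^2)) * f^2) * inverse ((f^3)^2)) - K)) (at x)"
      unfolding h_def using DERIV_diff[OF d4 DERIV_cmult_Id[of K]] by simp
    have e: "- ((3 * (- ((norm g)^2)) * f^2) * inverse ((f^3)^2)) = 3 * (norm g)^2 / f^4"
      using fp by (simp add: field_simps)
    have "K \<le> 3 * (norm g)^2 / f^4"
      unfolding K_def using gi2 fp mp c by (simp add: field_simps)
    then show "\<exists>y. (h has_real_derivative y) (at x) \<and> 0 \<le> y"
      using d5 e by auto
  next
    have thc: "continuous_on {0..t} th" using flow_cont[OF fl]
      by (rule continuous_on_subset) auto
    have "\<forall>u\<in>{0..t}. (L (th u) - eps)^3 \<noteq> 0" using pos by auto
    then show "continuous_on {0..t} h" unfolding h_def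
      by (intro continuous_intros comp_cont[OF grad fl]) auto
  qed
  then show ?thesis unfolding h_def K_def m_def th0 by simp
qed


lemma inv_cube_powr:
  fixes f :: real assumes "f > 0"
  shows "(inverse (f^3)) powr (-1/3) = f"
proof -
  have e1: "(-1/3::real) = -(1/3)" by simp
  have e2: "f^3 = f powr 3" using assms by (simp add: powr_realpow)
  have "(inverse (f^3)) powr (-1/3) = inverse (inverse ((f^3) powr (1/3)))"
    by (simp only: e1 powr_minus inverse_powr)
  also have "\<dots> = (f powr 3) powr (1/3)" by (simp only: inverse_inverse_eq e2)
  also have "\<dots> = f" using assms by (simp only: powr_powr) simp
  finally show ?thesis .
qed

theorem lemma1:
  fixes L :: "'a::euclidean_space \<Rightarrow> real" and gradL :: "'a \<Rightarrow> 'a"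
    and theta0 :: 'a and eps R c :: real
  assumes nonneg: "\<forall>\<theta>. L \<theta> \<ge> 0"
    and grad: "\<forall>\<theta>. GDERIV L \<theta> :> gradL \<theta>"
    and eps: "eps > 0" and R: "R \<ge> 0" and c: "c > 0"
    and loj: "\<forall>\<theta>. norm (\<theta> - theta0) \<le> R \<longrightarrow>
               norm (gradL \<theta>) \<ge> max 0 (L \<theta> - eps) / (norm (\<theta> - theta0) + c)"
  shows "conv_crit L gradL theta0
           (c / (R + c) * L theta0 + (1 - c / (R + c)) * eps)
           (if max 0 (L theta0 - eps) = 0 then \<infinity>
            else ereal (3 * c powr (-2) * (max 0 (L theta0 - eps)) powr (-2)))"
proof -
  define m where "m = L theta0 - eps"
  define \<tau> where "\<tau> = c / (R + c)"
  have tp: "\<tau> > 0" unfolding \<tau>_def using R c by simp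
  have t1: "\<tau> \<le> 1" unfolding \<tau>_def using R c by simp
  have e0: "c / (R + c) * L theta0 + (1 - c / (R + c)) * eps = eps + \<tau> * m"
  proof -
    have gen: "\<And>x::real. x * L theta0 + (1 - x) * eps = eps + x * (L theta0 - eps)"
      by (simp add: algebra_simps)
    show ?thesis using gen[of "c / (R + c)"] unfolding \<tau>_def m_def .
  qed
  show ?thesis
  proof (cases "max 0 m = 0")
    case True
    then have m0: "m \<le> 0" by simp
    have "\<tau> * m \<ge> m" using m0 t1 by (simp add: mult_le_cancel_right1) 
    have main: "\<forall>th. grad_flow gradL theta0 th \<longrightarrow> (\<forall>t\<ge>0. L (th t) \<le> eps + \<tau> * m)"
    proof (intro allI impI)
      fix th :: "real \<Rightarrow> 'a" and t :: real
      assume fl: "grad_flow gradL theta0 th" and t: "0 \<le> t"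
      have "L (th t) \<le> L (th 0)" using L_mono[OF grad fl order.refl t] .
      also have "th 0 = theta0" using fl unfolding grad_flow_def by simp
      finally show "L (th t) \<le> eps + \<tau> * m" using \<open>\<tau> * m \<ge> m\<close> unfolding m_def by simp
    qed
    have ifeq: "(if max 0 (L theta0 - eps) = 0 then \<infinity>
            else ereal (3 * c powr (-2) * (max 0 (L theta0 - eps)) powr (-2))) = \<infinity>"
      using True unfolding m_def by simp
    show ?thesis unfolding conv_crit_def e0 ifeq using main by simp
  next
    case False
    then have mp: "m > 0" by simp
    define K where "K = 3 / (m^2 * c^2)"
    have kap: "3 * c powr (-2) * (max 0 m) powr (-2) = K"
      using mp c unfolding K_def by (simp add: powr_minus powr_realpow divide_inverse)
    have L0: "L theta0 > 0" using mp eps unfolding m_def by simp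
    have ifeq: "(if max 0 (L theta0 - eps) = 0 then \<infinity>
            else ereal (3 * c powr (-2) * (max 0 (L theta0 - eps)) powr (-2))) = ereal K"
      using False kap unfolding m_def by simp
    have main: "\<forall>th. grad_flow gradL theta0 th \<longrightarrow> (\<forall>t>0. L (th t) \<le> eps + \<tau> * m + (K * t + 1 / L theta0 ^ 3) powr (-1/3))"
    proof (intro allI impI)
      fix th :: "real \<Rightarrow> 'a" and t :: real
      assume fl: "grad_flow gradL theta0 th" and t: "0 < t"
      have th0: "th 0 = theta0" using fl unfolding grad_flow_def by simp
      define A where "A = K * t + 1 / L theta0 ^ 3"
      have Ap: "A > 0" unfolding A_def K_def using mp c t L0 by (simp add: add_nonneg_pos)
      have Bp: "(K * t + 1 / L theta0 ^ 3) powr (-1/3) > 0" using Ap unfolding A_def by simp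
      show "L (th t) \<le> eps + \<tau> * m + (K * t + 1 / L theta0 ^ 3) powr (-1/3)"
      proof (cases "L (th t) \<le> eps + \<tau> * m")
        case True then show ?thesis using Bp by linarith
      next
        case False
        have tmp: "\<tau> * m > 0" using tp mp by simp
        have big: "\<forall>u\<in>{0..t}. L (th u) > eps + \<tau> * m"
        proof
          fix u assume u: "u \<in> {0..t}"
          have "L (th t) \<le> L (th u)" using L_mono[OF grad fl, of u t] u by auto
          then show "L (th u) > eps + \<tau> * m" using False by linarith
        qed
        define d where "d u = norm (th u - theta0)" for u
        define S where "S = {0..t} \<inter> d -` {R..}"
        have thc: "continuous_on {0..t} th" using flow_cont[OF fl]
          by (rule continuous_on_subset) auto
        have dc: "continuous_on {0..t} d" unfolding d_def by (intro continuous_intros thc)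
        have "closed S" unfolding S_def by (rule continuous_closed_preimage[OF dc]) auto
        moreover have "bounded S" unfolding S_def by (rule bounded_subset[of "{0..t}"]) auto
        ultimately have cS: "compact S" by (simp add: compact_eq_bounded_closed)
        show ?thesis
        proof (cases "S = {}")
          case False
          then obtain u1 where u1: "u1 \<in> S" "\<forall>v\<in>S. u1 \<le> v"
            using compact_attains_inf[OF cS] by blast
          have u1t: "0 \<le> u1" "u1 \<le> t" "d u1 \<ge> R" using u1(1) unfolding S_def by auto
          have inb: "\<forall>v\<in>{0..<u1}. norm (th v - theta0) \<le> R"
          proof
            fix v assume v: "v \<in> {0..<u1}"
            show "norm (th v - theta0) \<le> R"
            proof (rule ccontr)
              assume "\<not> ?thesis"
              then have "v \<in> S" using v u1t unfolding S_def d_def by auto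
              then show False using u1(2) v by force
            qed
          qed
          have ps: "\<forall>v\<in>{0..u1}. L (th v) \<ge> eps" using big u1t tmp by force
          have bb: "(L (th u1) - eps) * (d u1 + c) \<le> m * c"
            using ball_bound[OF grad fl c loj u1t(1) inb ps] unfolding d_def m_def .
          have fu: "L (th u1) - eps > \<tau> * m" using bspec[OF big, of u1] u1t by simp
          have "(L (th u1) - eps) * (R + c) \<le> (L (th u1) - eps) * (d u1 + c)"
            using fu tmp u1t by (intro mult_left_mono) auto
          then have "(L (th u1) - eps) * (R + c) \<le> m * c" using bb by linarith
          then have "L (th u1) - eps \<le> \<tau> * m" unfolding \<tau>_def using R c
            by (simp add: field_simps)
          then show ?thesis using fu by simp
        next
          case True
          have inb: "\<forall>u\<in>{0..t}. norm (th u - theta0) \<le> R"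
            using True unfolding S_def d_def by force
          have bd: "\<forall>u\<in>{0..t}. (L (th u) - eps) * (norm (th u - theta0) + c) \<le> (L theta0 - eps) * c"
          proof
            fix u assume u: "u \<in> {0..t}"
            have pa: "\<forall>v\<in>{0..t}. L (th v) \<ge> eps" using big tmp by force
            show "(L (th u) - eps) * (norm (th u - theta0) + c) \<le> (L theta0 - eps) * c"
              using u pa inb by (intro ball_bound[OF grad fl c loj]) auto
          qed
          have ps: "\<forall>u\<in>{0..t}. L (th u) > eps" using big tmp by force
          have dec: "inverse (m^3) + K * t \<le> inverse ((L (th t) - eps)^3)"
            using decay[OF grad fl c loj _ inb bd ps] t unfolding m_def K_def by simp
          have "m^3 \<le> (L theta0)^3" using mp eps unfolding m_def by (intro power_mono) auto
          then have "inverse ((L theta0)^3) \<le> inverse (m^3)" using mp by (intro le_imp_inverse_le) auto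
          then have "1 / L theta0 ^ 3 \<le> inverse (m^3)" by (simp add: divide_inverse)
          then have Ale: "A \<le> inverse ((L (th t) - eps)^3)" using dec unfolding A_def by simp
          have fp: "L (th t) - eps > 0" using ps t by auto
          have "L (th t) - eps = (inverse ((L (th t) - eps)^3)) powr (-1/3)"
            using inv_cube_powr[OF fp] by simp
          also have "\<dots> \<le> A powr (-1/3)"
            by (rule powr_mono2') (use Ap Ale in auto)
          finally show ?thesis using tmp unfolding A_def by simp
        qed
      qed
    qed
    show ?thesis unfolding conv_crit_def e0 ifeq using main by simp
  qed
qed

end
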